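(* Let $C$ be the closed disk with center $(a,b)$ and radius $r>0$; for $i\in\mathbb{N}$ let $C_i$ be the closed disk with center $(ia,ib)$ and radius $ir$; let $\mathcal{S}=\bigcup_{i\geq0}C_i\cap\mathbb{N}^2$, and let $\tau_1,\tau_2$ be the extremal rays of $L_{\mathbb{Q}_{\geq}}(C\cap\mathbb{R}^2_{\geq})$. Then every $X=(x,y)\in\mathcal{S}\setminus(\tau_1\cup\tau_2)$ satisfies $$\frac{1}{2}\left(\frac{(a,b)\cdot(x,y)}{\sqrt{(\mathrm{d}(X)r)^2-[(b,-a)\cdot(x,y)]^2}}+1\right)\mathrm{d}(X)\ \bmod\ \frac{\mathrm{d}(X)\left(\mathrm{d}((a,b))^2-r^2\right)}{2\sqrt{(\mathrm{d}(X)r)^2-[(b,-a)\cdot(x,y)]^2}}\ \le\ \mathrm{d}(X).$$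
   Context: $\mathbb{N}=\{0,1,2,\dots\}$. For $A\subseteq\mathbb{R}^2_{\geq}$, $L_{\mathbb{Q}_{\geq}}(A)=\{\sum_{i=1}^p q_ia_i\mid p\in\mathbb{N},\ q_i\in\mathbb{Q}_{\geq},\ a_i\in A\}$ and its extremal rays are its two boundary half-lines from the origin. $\mathrm{d}(X)$ is the Euclidean norm of $X$; $\cdot$ is the standard dot product. For real $u$ and $v>0$, $u\bmod v=u-v\lfloor u/v\rfloor$. *)

theory Defs
  imports "HOL-Analysis.Analysis"
begin

definition nonneg_quadrant :: "(real \<times> real) set" where
  "nonneg_quadrant = {(x, y). x \<ge> 0 \<and> y \<ge> 0}"

definition nat_points :: "(real \<times> real) set" where
  "nat_points = {(real m, real n) | m n :: nat. True}"

definition Lcone :: "(real \<times> real) set \<Rightarrow> (real \<times> real) set" where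
  "Lcone A = {(\<Sum>i<p. q i *\<^sub>R v i) | (p :: nat) (q :: nat \<Rightarrow> real) (v :: nat \<Rightarrow> real \<times> real).
                 \<forall>i<p. q i \<in> \<rat> \<and> q i \<ge> 0 \<and> v i \<in> A}"

definition halfline :: "real \<times> real \<Rightarrow> (real \<times> real) set" where
  "halfline u = {t *\<^sub>R u | t. t \<ge> 0}"

definition is_halfline :: "(real \<times> real) set \<Rightarrow> bool" where
  "is_halfline R \<longleftrightarrow> (\<exists>u. u \<noteq> 0 \<and> R = halfline u)"

definition extremal_rays :: "(real \<times> real) set \<Rightarrow> (real \<times> real) set \<Rightarrow> (real \<times> real) set \<Rightarrow> bool" where
  "extremal_rays K \<tau>1 \<tau>2 \<longleftrightarrow> is_halfline \<tau>1 \<and> is_halfline \<tau>2 \<and> frontier K = \<tau>1 \<union> \<tau>2"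

definition circle_semigroup :: "real \<Rightarrow> real \<Rightarrow> real \<Rightarrow> (real \<times> real) set" where
  "circle_semigroup a b r =
     (\<Union>i::nat. cball (real i *\<^sub>R (a, b)) (real i * r)) \<inter> nat_points"

text \<open>u mod v = u - v * floor(u/v) (paper: for v > 0).\<close>
definition rmod :: "real \<Rightarrow> real \<Rightarrow> real" where
  "rmod u v = u - v * of_int \<lfloor>u / v\<rfloor>"

end

theory Submission
  imports Defs
begin

lemma rmod_le_neg: assumes "v < 0" shows "rmod u v \<le> 0"
proof -
  have "of_int \<lfloor>u / v\<rfloor> \<le> u / v" by simp
  hence "v * of_int \<lfloor>u / v\<rfloor> \<ge> v * (u / v)" using assms by (intro mult_left_mono_neg) auto
  moreover have "v * (u / v) = u" using assms by simp
  ultimately show ?thesis unfolding rmod_def by simp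
qed

lemma core:
  fixes x y a b r d N D :: real and i :: nat
  assumes d0: "d \<ge> 0" and dd: "d^2 = x^2 + y^2" and NN: "N = a^2 + b^2" and r0: "r > 0"
    and hi: "(x - real i * a)^2 + (y - real i * b)^2 \<le> (real i * r)^2"
    and DD: "D = sqrt ((d * r)^2 - (b * x - a * y)^2)"
  shows "rmod (1/2 * ((a * x + b * y) / D + 1) * d) (d * (N - r^2) / (2 * D)) \<le> d"
proof -
  define s where "s = a * x + b * y"
  define K where "K = N - r^2"
  have star: "d^2 - 2 * real i * s + (real i)^2 * K \<le> 0"
    using hi unfolding s_def K_def NN dd by (simp add: power2_eq_square algebra_simps)
  have dr: "(d * r)^2 = (x^2 + y^2) * r^2" using dd by (simp add: power_mult_distrib)
  have Qe: "(d * r)^2 - (b * x - a * y)^2 = s^2 - d^2 * K"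
    unfolding dr s_def K_def NN dd by (simp add: power2_eq_square algebra_simps)
  show ?thesis
  proof (cases "d = 0")
    case True thus ?thesis by (simp add: rmod_def)
  next
    case False
    hence dpos: "d > 0" using d0 by simp
    have Q0: "s^2 - d^2 * K \<ge> 0"
    proof (cases "K \<le> 0")
      case True
      have "d^2 * K \<le> 0" using True by (simp add: mult_nonneg_nonpos)
      moreover have "s^2 \<ge> 0" by simp
      ultimately show ?thesis by linarith
    next
      case False
      have "(K * real i - s)^2 = K * (d^2 - 2 * real i * s + (real i)^2 * K) + s^2 - K * d^2"
        by (simp add: power2_eq_square algebra_simps)
      also have "\<dots> \<le> s^2 - K * d^2"
      proof -
        have "K * (d^2 - 2 * real i * s + (real i)^2 * K) \<le> 0"
          using star False by (intro mult_nonneg_nonpos) auto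
        thus ?thesis by linarith
      qed
      finally have "0 \<le> s^2 - K * d^2" using zero_le_power2[of "K * real i - s"] by linarith
      thus ?thesis by (simp add: mult.commute)
    qed
    have D0: "D \<ge> 0" using DD Qe Q0 by simp
    have DQ: "D^2 = s^2 - d^2 * K" using DD Qe Q0 by simp
    show ?thesis
    proof (cases "D = 0")
      case True thus ?thesis using d0 by (simp add: rmod_def)
    next
      case Dn: False
      hence Dpos: "D > 0" using D0 by simp
      show ?thesis
      proof (cases "K < 0")
        case True
        have "d * K / (2 * D) < 0" using True dpos Dpos by (simp add: divide_neg_pos mult_pos_neg)
        hence "rmod (1/2 * (s / D + 1) * d) (d * K / (2 * D)) \<le> 0" by (rule rmod_le_neg)
        thus ?thesis using d0 unfolding K_def s_def by linarith
      next
        case Kn: False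
        show ?thesis
        proof (cases "K = 0")
          case True
          have "D = sqrt (D^2)" using D0 by simp
          also have "\<dots> = sqrt (s^2)" using DQ True by simp
          finally have "D = \<bar>s\<bar>" by simp
          hence "s / D \<le> 1" using Dpos by simp
          hence "(s / D + 1) * d \<le> 2 * d" using d0 mult_right_mono[of "s / D + 1" 2 d] by simp
          hence "1/2 * (s / D + 1) * d \<le> d" by simp
          thus ?thesis using True unfolding rmod_def K_def s_def by simp
        next
          case False
          hence Kpos: "K > 0" using Kn by simp
          define u where "u = 1/2 * (s / D + 1) * d"
          define v where "v = d * K / (2 * D)"
          have vpos: "v > 0" unfolding v_def using dpos Kpos Dpos by simp
          have uv: "u / v = (s + D) / K"
            unfolding u_def v_def using dpos Kpos Dpos by (simp add: field_simps)
          have "(K * real i - s)^2 = K * (d^2 - 2 * real i * s + (real i)^2 * K) + s^2 - K * d^2"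
            by (simp add: power2_eq_square algebra_simps)
          also have "\<dots> \<le> D^2"
          proof -
            have "K * (d^2 - 2 * real i * s + (real i)^2 * K) \<le> 0"
              using star Kpos by (intro mult_nonneg_nonpos) auto
            thus ?thesis using DQ by (simp add: mult.commute)
          qed
          finally have "\<bar>K * real i - s\<bar> \<le> \<bar>D\<bar>" by (simp only: abs_le_square_iff)
          hence "\<bar>K * real i - s\<bar> \<le> D" using D0 by simp
          hence ilo: "real i \<ge> (s - D) / K" and ihi: "real i \<le> (s + D) / K"
            using Kpos by (auto simp: field_simps)
          have "of_int (int i) \<le> u / v" using ihi uv by simp
          hence "int i \<le> \<lfloor>u / v\<rfloor>" by (simp only: le_floor_iff)
          hence "real i \<le> of_int \<lfloor>u / v\<rfloor>" by linarith
          hence "u / v - of_int \<lfloor>u / v\<rfloor> \<le> (s + D) / K - (s - D) / K" using ilo uv by linarith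
          also have "\<dots> = 2 * D / K" using Kpos by (simp add: field_simps)
          finally have "v * (u / v - of_int \<lfloor>u / v\<rfloor>) \<le> v * (2 * D / K)"
            using vpos by (intro mult_left_mono) auto
          also have "v * (2 * D / K) = d" unfolding v_def using Kpos Dpos by (simp add: field_simps)
          finally have "rmod u v \<le> d" unfolding rmod_def using vpos by (simp add: algebra_simps)
          thus ?thesis unfolding u_def v_def s_def K_def by simp
        qed
      qed
    qed
  qed
qed

theorem corollary4p6:
  fixes a b r x y :: real and \<tau>1 \<tau>2 :: "(real \<times> real) set"
  assumes "r > 0"
    and "extremal_rays (Lcone (cball (a, b) r \<inter> nonneg_quadrant)) \<tau>1 \<tau>2"
    and "(x, y) \<in> circle_semigroup a b r - (\<tau>1 \<union> \<tau>2)"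
  shows "rmod (1/2 * ((a * x + b * y) / sqrt ((norm (x, y) * r)^2 - (b * x - a * y)^2) + 1) * norm (x, y))
              (norm (x, y) * ((norm (a, b))^2 - r^2) / (2 * sqrt ((norm (x, y) * r)^2 - (b * x - a * y)^2)))
         \<le> norm (x, y)"
proof -
  from assms(3) obtain i :: nat where "(x, y) \<in> cball (real i *\<^sub>R (a, b)) (real i * r)"
    unfolding circle_semigroup_def by blast
  hence h: "sqrt ((real i * a - x)^2 + (real i * b - y)^2) \<le> real i * r"
    by (simp add: dist_norm norm_Pair)
  have "(x - real i * a)^2 + (y - real i * b)^2 = (real i * a - x)^2 + (real i * b - y)^2"
    by (simp add: power2_commute)
  also have "\<dots> \<le> (real i * r)^2"
    using h by (simp add: sqrt_le_D)
  finally have hi: "(x - real i * a)^2 + (y - real i * b)^2 \<le> (real i * r)^2" .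
  have dd: "(norm (x, y))^2 = x^2 + y^2" by (simp add: norm_Pair)
  have NN: "(norm (a, b))^2 = a^2 + b^2" by (simp add: norm_Pair)
  show ?thesis
    using core[OF norm_ge_zero dd NN assms(1) hi refl] .
qed

end
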